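(* Let $(\mathbf X_1,\mathbf Y_1)$ and $(\mathbf X_2,\mathbf Y_2)$ be general correlated sources, both uniformly integrable, and let $(\mathbf X,\mathbf Y)$ be their mixture $P_{X^nY^n}=\alpha_1P_{X_1^nY_1^n}+\alpha_2P_{X_2^nY_2^n}$ with constants $\alpha_1,\alpha_2>0$, $\alpha_1+\alpha_2=1$. Then \[\overline H_s(\mathbf X|\mathbf Y)\ge\lim_{\varepsilon\downarrow0}\limsup_{n\to\infty}\sum_{i=1,2}\frac{\alpha_i}{n}\overline H_s^\varepsilon(X_i^n|Y_i^n).\]
   Context: A general correlated source $\{(X^n,Y^n)\}_{n\ge1}$ is an arbitrary sequence of pairs of random variables on $\mathcal X^n\times\mathcal Y^n$, $\mathcal X,\mathcal Y$ finite or countably infinite (no structural assumptions; marginal probabilities positive). Logs base 2. A source is uniformly integrable if $Z_n=\frac1n\log\frac1{P_{X^n|Y^n}(X^n|Y^n)}$ satisfies $\lim_{u\to\infty}\sup_n\sum_{z:|z|\ge u}P_{Z_n}(z)|z|=0$. For a source with distributions $P_{X^nY^n}$, $x^n\in\mathcal X^n$ and $\varepsilon\in(0,1]$: $\overline h^\varepsilon(x^n|P_{X^nY^n})=\inf\{a\in\mathbb R:\sum_{y^n:\log(1/P_{X^n|Y^n}(x^n|y^n))>a}P_{Y^n|X^n}(y^n|x^n)\le\varepsilon\}$; $\overline H_s^\varepsilon(X^n|Y^n)=\sum_{x^n}P_{X^n}(x^n)\overline h^\varepsilon(x^n|P_{X^nY^n})$ (and analogously $\overline H_s^\varepsilon(X_i^n|Y_i^n)$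 using $P_{X_i^nY_i^n}$); $\overline H_s(\mathbf X|\mathbf Y)=\lim_{\varepsilon\downarrow0}\limsup_n\frac1n\overline H_s^\varepsilon(X^n|Y^n)$. *)

theory Defs
  imports "HOL-Probability.Probability" "HOL-Library.Countable"
begin

text \<open>A joint distribution of (X^n, Y^n) is a pmf on pairs of lists; the alphabets are the
  countable types 'a and 'b (finite or countably infinite).\<close>

definition condXY :: "('a \<times> 'b) pmf \<Rightarrow> 'a \<Rightarrow> 'b \<Rightarrow> real" where
  "condXY p x y = pmf p (x, y) / pmf (map_pmf snd p) y"

definition condYX :: "('a \<times> 'b) pmf \<Rightarrow> 'b \<Rightarrow> 'a \<Rightarrow> real" where
  "condYX p y x = pmf p (x, y) / pmf (map_pmf fst p) x"

definition hbar :: "real \<Rightarrow> ('a \<times> 'b) pmf \<Rightarrow> 'a \<Rightarrow> real" where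
  "hbar \<epsilon> p x = Inf {a :: real.
     (\<Sum>\<^sub>\<infinity> y \<in> {y. log 2 (1 / condXY p x y) > a}. condYX p y x) \<le> \<epsilon>}"

definition Hs_eps :: "real \<Rightarrow> ('a \<times> 'b) pmf \<Rightarrow> ennreal" where
  "Hs_eps \<epsilon> p = (\<Sum>\<^sub>\<infinity> x. ennreal (pmf (map_pmf fst p) x * hbar \<epsilon> p x))"

definition Hs :: "(nat \<Rightarrow> ('a \<times> 'b) pmf) \<Rightarrow> ennreal" where
  "Hs P = Lim (at_right 0) (\<lambda>\<epsilon>. limsup (\<lambda>n. ennreal (1 / real n) * Hs_eps \<epsilon> (P n)))"

definition general_source :: "(nat \<Rightarrow> ('a list \<times> 'b list) pmf) \<Rightarrow> bool" where
  "general_source P \<longleftrightarrow>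
     (\<forall>n. \<forall>(x, y) \<in> set_pmf (P n). length x = n \<and> length y = n) \<and>
     (\<forall>n x. length x = n \<longrightarrow> pmf (map_pmf fst (P n)) x > 0) \<and>
     (\<forall>n y. length y = n \<longrightarrow> pmf (map_pmf snd (P n)) y > 0)"

definition Zdist :: "(nat \<Rightarrow> ('a \<times> 'b) pmf) \<Rightarrow> nat \<Rightarrow> real pmf" where
  "Zdist P n = map_pmf (\<lambda>(x, y). (1 / real n) * log 2 (1 / condXY (P n) x y)) (P n)"

definition unif_integrable :: "(nat \<Rightarrow> ('a \<times> 'b) pmf) \<Rightarrow> bool" where
  "unif_integrable P \<longleftrightarrow>
     ((\<lambda>u::real. SUP n\<in>{1..}. \<Sum>\<^sub>\<infinity> z \<in> {z. \<bar>z\<bar> \<ge> u}. ennreal (pmf (Zdist P n) z * \<bar>z\<bar>))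
        \<longlongrightarrow> 0) at_top"

end

theory Submission
  imports Defs
begin

lemma pmf_summable_on: "(pmf p) summable_on A"
proof -
  have "(\<lambda>x. norm (pmf p x)) summable_on A"
    using abs_summable_equivalent pmf_abs_summable by blast
  thus ?thesis using abs_summable_summable by blast
qed

lemma measure_infsum: "measure (measure_pmf p) A = (\<Sum>\<^sub>\<infinity> w\<in>A. pmf p w)"
  by (simp add: measure_pmf_conv_infsetsum infsetsum_infsum pmf_abs_summable)

lemma ennreal_infsum:
  fixes f :: "'c \<Rightarrow> real"
  assumes "f summable_on A" "\<And>x. x \<in> A \<Longrightarrow> f x \<ge> 0"
  shows "ennreal (infsum f A) = (\<Sum>\<^sub>\<infinity> x\<in>A. ennreal (f x))"
proof -
  have "\<And>F. \<lbrakk>finite F; F \<subseteq> A\<rbrakk> \<Longrightarrow> sum (ennreal \<circ> f) F = ennreal (sum f F)"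
    by (metis (mono_tags, lifting) comp_def assms(2) subsetD sum.cong sum_ennreal)
  then have "ennreal (infsum f A) = infsum (ennreal \<circ> f) A"
    by (simp add: infsum_comm_additive_general assms(1))
  thus ?thesis by (simp add: o_def)
qed

lemma ennreal_measure_infsum: "ennreal (measure (measure_pmf p) A) = (\<Sum>\<^sub>\<infinity> w\<in>A. ennreal (pmf p w))"
  by (simp add: measure_infsum ennreal_infsum pmf_summable_on)

lemma pair_summable: "(\<lambda>y. pmf p (x, y)) summable_on B"
proof -
  have "pmf p summable_on (Pair x ` B)" by (rule pmf_summable_on)
  thus ?thesis by (subst (asm) summable_on_reindex) (auto simp: o_def inj_on_def)
qed

lemma measure_pair: "measure (measure_pmf p) (Pair x ` B) = (\<Sum>\<^sub>\<infinity> y\<in>B. pmf p (x, y))"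
  by (simp add: measure_infsum infsum_reindex inj_on_def o_def)

lemma ennreal_measure_pair: "ennreal (measure (measure_pmf p) (Pair x ` B)) = (\<Sum>\<^sub>\<infinity> y\<in>B. ennreal (pmf p (x, y)))"
  by (simp add: ennreal_measure_infsum infsum_reindex inj_on_def o_def)

lemma mX_eq: "pmf (map_pmf fst p) x = measure (measure_pmf p) (Pair x ` UNIV)"
proof -
  have e: "fst -` {x} = Pair x ` UNIV" by auto
  show ?thesis unfolding pmf_map e ..
qed

lemma pmf_le_mY: "pmf p (x, y) \<le> pmf (map_pmf snd p) y"
proof -
  have "pmf p (x,y) = measure (measure_pmf p) {(x,y)}" by (simp add: measure_pmf_single)
  also have "\<dots> \<le> measure (measure_pmf p) (snd -` {y})"
    by (rule measure_pmf.finite_measure_mono) auto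
  finally show ?thesis by (simp add: pmf_map)
qed

lemma pmf_le_mX: "pmf p (x, y) \<le> pmf (map_pmf fst p) x"
proof -
  have "pmf p (x,y) = measure (measure_pmf p) {(x,y)}" by (simp add: measure_pmf_single)
  also have "\<dots> \<le> measure (measure_pmf p) (fst -` {x})"
    by (rule measure_pmf.finite_measure_mono) auto
  finally show ?thesis by (simp add: pmf_map)
qed

lemma mix_measure:
  assumes "\<And>z. pmf p z = a1 * pmf p1 z + a2 * pmf p2 z"
  shows "measure (measure_pmf p) A = a1 * measure (measure_pmf p1) A + a2 * measure (measure_pmf p2) A"
proof -
  have "measure (measure_pmf p) A = (\<Sum>\<^sub>\<infinity> w\<in>A. a1 * pmf p1 w + a2 * pmf p2 w)"
    by (simp add: measure_infsum assms)
  also have "\<dots> = (\<Sum>\<^sub>\<infinity> w\<in>A. a1 * pmf p1 w) + (\<Sum>\<^sub>\<infinity> w\<in>A. a2 * pmf p2 w)"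
    by (intro infsum_add summable_on_cmult_right pmf_summable_on)
  also have "\<dots> = a1 * measure (measure_pmf p1) A + a2 * measure (measure_pmf p2) A"
    by (simp add: infsum_cmult_right' measure_infsum)
  finally show ?thesis .
qed

lemma mix_map:
  assumes "\<And>z. pmf p z = a1 * pmf p1 z + a2 * pmf p2 z"
  shows "pmf (map_pmf f p) x = a1 * pmf (map_pmf f p1) x + a2 * pmf (map_pmf f p2) x"
  unfolding pmf_map by (rule mix_measure[OF assms])

definition W :: "('a \<times> 'b) pmf \<Rightarrow> 'a \<Rightarrow> 'b set \<Rightarrow> real" where
  "W p x B = measure (measure_pmf p) (Pair x ` B) / pmf (map_pmf fst p) x"

definition gg :: "('a \<times> 'b) pmf \<Rightarrow> 'a \<Rightarrow> 'b \<Rightarrow> real" where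
  "gg p x y = log 2 (1 / condXY p x y)"

lemma condYX_sum: "(\<Sum>\<^sub>\<infinity> y\<in>B. condYX p y x) = W p x B"
  unfolding condYX_def W_def measure_pair
  by (simp add: divide_inverse infsum_cmult_left')

lemma hbar_alt: "hbar \<epsilon> p x = Inf {a. W p x {y. gg p x y > a} \<le> \<epsilon>}"
  unfolding hbar_def condYX_sum gg_def ..

lemma W_mono: "B \<subseteq> C \<Longrightarrow> W p x B \<le> W p x C"
  unfolding W_def
  by (intro divide_right_mono measure_pmf.finite_measure_mono) auto

lemma W_UNIV: "pmf (map_pmf fst p) x > 0 \<Longrightarrow> W p x UNIV = 1"
  unfolding W_def mX_eq by simp

lemma cond_pos_le1:
  assumes "pmf p (x, y) > 0"
  shows "condXY p x y > 0" "condXY p x y \<le> 1"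
proof -
  have le: "pmf p (x,y) \<le> pmf (map_pmf snd p) y" by (rule pmf_le_mY)
  then show "condXY p x y > 0" "condXY p x y \<le> 1" using assms
    unfolding condXY_def by auto
qed

lemma gg_nonneg: "pmf p (x, y) > 0 \<Longrightarrow> gg p x y \<ge> 0"
  using cond_pos_le1[of p x y] unfolding gg_def by simp

lemma W_neg:
  assumes "pmf (map_pmf fst p) x > 0" "a < 0"
  shows "W p x {y. gg p x y > a} = 1"
proof -
  have "measure (measure_pmf p) (Pair x ` {y. gg p x y > a}) = measure (measure_pmf p) (Pair x ` UNIV)"
  proof (rule measure_eq_AE)
    show "AE z in measure_pmf p. (z \<in> Pair x ` {y. a < gg p x y}) = (z \<in> range (Pair x))"
    proof (rule AE_pmfI)
      fix z assume "z \<in> set_pmf p"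
      hence "pmf p z > 0" by (simp add: pmf_positive)
      thus "(z \<in> Pair x ` {y. a < gg p x y}) = (z \<in> range (Pair x))"
        using gg_nonneg[of p x "snd z"] assms(2) by (cases z) auto
    qed
  qed auto
  thus ?thesis using assms(1) unfolding W_def mX_eq by simp
qed

lemma S_bdd:
  assumes "pmf (map_pmf fst p) x > 0" "\<epsilon> < 1"
  shows "\<And>a. W p x {y. gg p x y > a} \<le> \<epsilon> \<Longrightarrow> a \<ge> 0"
  using W_neg[OF assms(1)] assms(2) by (metis linorder_not_le order.strict_iff_not)

lemma S_nonempty:
  assumes "pmf (map_pmf fst p) x > 0" "\<epsilon> > 0"
  shows "\<exists>a. W p x {y. gg p x y > a} \<le> \<epsilon>"
proof -
  define A where "A = (\<lambda>k::nat. Pair x ` {y. gg p x y > real k})"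
  have dec: "decseq A" unfolding A_def decseq_def by auto
  have int: "(\<Inter>k. A k) = {}"
  proof safe
    fix z assume "z \<in> (\<Inter>k. A k)"
    then obtain y where "z = (x, y)" using A_def by auto
    moreover obtain k::nat where "gg p x y < real k" using reals_Archimedean2 by blast
    moreover have "z \<in> A k" using \<open>z \<in> (\<Inter>k. A k)\<close> by blast
    ultimately show "z \<in> {}" unfolding A_def by auto
  qed
  have "(\<lambda>k. measure (measure_pmf p) (A k)) \<longlonglongrightarrow> measure (measure_pmf p) (\<Inter>k. A k)"
    by (rule measure_pmf.finite_Lim_measure_decseq) (auto simp: dec)
  hence "(\<lambda>k. measure (measure_pmf p) (A k) / pmf (map_pmf fst p) x) \<longlonglongrightarrow> 0"
    using int by (auto intro: tendsto_divide_zero)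
  hence "eventually (\<lambda>k. measure (measure_pmf p) (A k) / pmf (map_pmf fst p) x < \<epsilon>) sequentially"
    using assms(2) by (rule order_tendstoD)
  then obtain k where "measure (measure_pmf p) (A k) / pmf (map_pmf fst p) x < \<epsilon>"
    by (metis eventually_sequentially order.refl)
  thus ?thesis unfolding A_def W_def by (intro exI[of _ "real k"]) simp
qed

lemma hbar_nonneg:
  assumes "pmf (map_pmf fst p) x > 0" "0 < \<epsilon>" "\<epsilon> < 1"
  shows "hbar \<epsilon> p x \<ge> 0"
  unfolding hbar_alt using S_nonempty[OF assms(1,2)] S_bdd[OF assms(1,3)]
  by (intro cInf_greatest) auto

lemma H1:
  assumes "pmf (map_pmf fst p) x > 0" "\<epsilon> < 1" "a < hbar \<epsilon> p x"
  shows "W p x {y. gg p x y > a} > \<epsilon>"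
proof (rule ccontr)
  assume "\<not> ?thesis"
  hence "a \<in> {a. W p x {y. gg p x y > a} \<le> \<epsilon>}" by simp
  moreover have "bdd_below {a. W p x {y. gg p x y > a} \<le> \<epsilon>}"
    using S_bdd[OF assms(1,2)] by (intro bdd_belowI[of _ 0]) auto
  ultimately have "hbar \<epsilon> p x \<le> a" unfolding hbar_alt by (rule cInf_lower)
  thus False using assms(3) by simp
qed

lemma H2:
  assumes "pmf (map_pmf fst p) x > 0" "\<epsilon> > 0"
    and "\<And>a. a < h \<Longrightarrow> W p x {y. gg p x y > a} > \<epsilon>"
  shows "hbar \<epsilon> p x \<ge> h"
  unfolding hbar_alt
proof (rule cInf_greatest)
  show "{a. W p x {y. gg p x y > a} \<le> \<epsilon>} \<noteq> {}" using S_nonempty[OF assms(1,2)] by auto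
next
  fix s assume s: "s \<in> {a. W p x {y. gg p x y > a} \<le> \<epsilon>}"
  show "h \<le> s"
  proof (rule ccontr)
    assume "\<not> h \<le> s"
    then obtain a where a: "s < a" "a < h" using dense by (meson not_le)
    have "W p x {y. gg p x y > a} \<le> W p x {y. gg p x y > s}" using a by (intro W_mono) auto
    thus False using assms(3)[OF a(2)] s by simp
  qed
qed

lemma hbar_antimono:
  assumes "pmf (map_pmf fst p) x > 0" "0 < \<epsilon>" "\<epsilon> \<le> \<epsilon>'" "\<epsilon>' < 1"
  shows "hbar \<epsilon>' p x \<le> hbar \<epsilon> p x"
  unfolding hbar_alt
proof (rule cInf_superset_mono)
  show "{a. W p x {y. gg p x y > a} \<le> \<epsilon>} \<noteq> {}" using S_nonempty[OF assms(1,2)] by auto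
  show "bdd_below {a. W p x {y. gg p x y > a} \<le> \<epsilon>'}"
    using S_bdd[OF assms(1,4)] by (intro bdd_belowI[of _ 0]) auto
qed (use assms(3) in auto)

lemma ennreal_summable[simp]: "(f::'c \<Rightarrow> ennreal) summable_on A"
  by (rule nonneg_summable_on_complete) simp

lemma ennreal_infsum_cmult:
  fixes f :: "'c \<Rightarrow> ennreal"
  shows "c * infsum f A = (\<Sum>\<^sub>\<infinity> x\<in>A. c * f x)"
proof -
  have "c * infsum f A = c * (SUP F\<in>{F. finite F \<and> F\<subseteq>A}. sum f F)"
    by (subst nonneg_infsum_complete) auto
  also have "\<dots> = (SUP F\<in>{F. finite F \<and> F\<subseteq>A}. c * sum f F)"
    by (rule SUP_mult_left_ennreal)
  also have "\<dots> = (SUP F\<in>{F. finite F \<and> F\<subseteq>A}. sum (\<lambda>x. c * f x) F)"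
    by (simp add: sum_distrib_left)
  also have "\<dots> = (\<Sum>\<^sub>\<infinity> x\<in>A. c * f x)"
    by (subst nonneg_infsum_complete) auto
  finally show ?thesis .
qed

lemma ennreal_infsum_mono:
  fixes f g :: "'c \<Rightarrow> ennreal"
  assumes "A \<subseteq> B" "\<And>x. x \<in> A \<Longrightarrow> f x \<le> g x"
  shows "infsum f A \<le> infsum g B"
  apply (rule infsum_mono_neutral)
  apply (rule ennreal_summable)
  apply (rule ennreal_summable)
  using assms by auto

lemma H3:
  assumes pos: "pmf (map_pmf fst p) x > 0" and e: "0 < \<epsilon>" "\<epsilon> < 1"
  shows "ennreal (\<epsilon> * pmf (map_pmf fst p) x * hbar \<epsilon> p x) \<le> (\<Sum>\<^sub>\<infinity> y. ennreal (pmf p (x, y) * gg p x y))"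
    (is "ennreal (?m * ?h) \<le> ?R")
proof -
  have key: "ennreal (?m * a) \<le> ?R" if a: "0 \<le> a" "a < ?h" for a
  proof -
    define G where "G = {y. gg p x y > a}"
    have "W p x G > \<epsilon>" unfolding G_def by (rule H1[OF pos e(2) a(2)])
    hence "\<epsilon> * pmf (map_pmf fst p) x < measure (measure_pmf p) (Pair x ` G)"
      using pos unfolding W_def by (simp add: field_simps)
    hence "?m * a \<le> a * measure (measure_pmf p) (Pair x ` G)"
      using a(1) by (metis less_imp_le mult.commute mult_left_mono)
    hence "ennreal (?m * a) \<le> ennreal a * ennreal (measure (measure_pmf p) (Pair x ` G))"
      by (simp add: ennreal_mult'[symmetric] a(1) ennreal_leI)
    also have "\<dots> = (\<Sum>\<^sub>\<infinity> y\<in>G. ennreal a * ennreal (pmf p (x, y)))"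
      by (simp add: ennreal_measure_pair ennreal_infsum_cmult)
    also have "\<dots> \<le> ?R"
    proof (rule ennreal_infsum_mono)
      fix y assume "y \<in> G"
      hence "a \<le> gg p x y" unfolding G_def by simp
      hence "a * pmf p (x,y) \<le> pmf p (x,y) * gg p x y" by (simp add: mult.commute mult_right_mono)
      thus "ennreal a * ennreal (pmf p (x, y)) \<le> ennreal (pmf p (x, y) * gg p x y)"
        using a(1) by (simp add: ennreal_mult'[symmetric] ennreal_leI)
    qed auto
    finally show ?thesis .
  qed
  have h0: "?h \<ge> 0" by (rule hbar_nonneg[OF pos e])
  show ?thesis
  proof (rule ccontr)
    assume "\<not> ?thesis"
    hence lt: "?R < ennreal (?m * ?h)" by simp
    then obtain r where r: "?R = ennreal r" "r \<ge> 0"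
      by (cases ?R rule: ennreal_cases) auto
    have mpos: "?m > 0" using pos e by simp
    have "r < ?m * ?h" using lt r
      by (metis ennreal_less_iff mult_nonneg_nonneg h0 less_imp_le mpos)
    define t where "t = r / ?m"
    define a where "a = (t + ?h) / 2"
    have "t < ?h" using \<open>r < ?m * ?h\<close> mpos unfolding t_def by (simp add: divide_less_eq mult.commute)
    moreover have "t \<ge> 0" using r(2) mpos unfolding t_def by simp
    ultimately have a1: "0 \<le> a" "a < ?h" "r / ?m < a" unfolding a_def t_def[symmetric]
      by auto
    have "r < ?m * a" using a1(3) mpos by (simp add: divide_less_eq mult.commute)
    hence "ennreal r < ennreal (?m * a)" using r(2) by (simp add: ennreal_lessI)
    with key[OF a1(1,2)] r(1) show False by simp
  qed
qed

lemma meas_pair_le_mX: "measure (measure_pmf p) (Pair x ` B) \<le> pmf (map_pmf fst p) x"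
  unfolding mX_eq by (rule measure_pmf.finite_measure_mono) auto

lemma KP:
  fixes p p1 p2 :: "('a \<times> 'b) pmf"
  assumes mix: "\<And>z. pmf p z = a1 * pmf p1 z + a2 * pmf p2 z"
    and a: "a1 > 0" "a2 > 0"
    and t: "\<tau> > 0" and e: "0 < \<epsilon>" "\<epsilon> < 1"
    and pos: "pmf (map_pmf fst p) x > 0"
    and beta: "a1 * pmf (map_pmf fst p1) x \<ge> \<tau> * pmf (map_pmf fst p) x"
  shows "hbar (\<tau> * \<epsilon> / 2) p x \<ge> hbar \<epsilon> p1 x - log 2 (1 + 2 / (\<tau> * \<epsilon>))"
proof -
  define K where "K = 2 / (\<tau> * \<epsilon>)"
  define c where "c = log 2 (1 + K)"
  have Kpos: "K > 0" unfolding K_def using t e by simp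
  define m where "m = pmf (map_pmf fst p) x"
  define m1 where "m1 = pmf (map_pmf fst p1) x"
  define m2 where "m2 = pmf (map_pmf fst p2) x"
  have mm: "m = a1 * m1 + a2 * m2" unfolding m_def m1_def m2_def by (rule mix_map[OF mix])
  have m1pos: "m1 > 0" using beta pos t a unfolding m1_def
    by (metis mult_pos_pos order_less_le_trans zero_less_mult_pos)
  have m2nn: "m2 \<ge> 0" unfolding m2_def by simp
  have dpos: "\<tau> * \<epsilon> / 2 > 0" using t e by simp
  show ?thesis unfolding K_def[symmetric] c_def[symmetric]
  proof (rule H2[OF pos dpos])
    fix b assume b: "b < hbar \<epsilon> p1 x - c"
    define G where "G = {y. gg p1 x y > b + c}"
    define B where "B = {y. a2 * pmf p2 (x, y) > K * a1 * pmf p1 (x, y)}"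
    define Z0 where "Z0 = {y. pmf p1 (x, y) = 0}"
    define E where "E = {y. gg p x y > b}"
    have WG: "W p1 x G > \<epsilon>" unfolding G_def
      by (rule H1) (use m1pos e b in \<open>auto simp: m1_def\<close>)
    have sub: "G \<subseteq> E \<union> B \<union> Z0"
    proof
      fix y assume yG: "y \<in> G"
      show "y \<in> E \<union> B \<union> Z0"
      proof (cases "y \<in> B \<or> y \<in> Z0")
        case True thus ?thesis by auto
      next
        case False
        define q1 where "q1 = pmf p1 (x, y)"
        define q2 where "q2 = pmf p2 (x, y)"
        define r1 where "r1 = pmf (map_pmf snd p1) y"
        define r2 where "r2 = pmf (map_pmf snd p2) y"
        have q1: "q1 > 0" using False unfolding Z0_def q1_def using pmf_nonneg[of p1 "(x,y)"] by auto
        have q2B: "a2 * q2 \<le> K * a1 * q1" using False unfolding B_def q1_def q2_def by auto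
        have r1: "r1 \<ge> q1" unfolding r1_def q1_def by (rule pmf_le_mY)
        have r2: "r2 \<ge> 0" unfolding r2_def by simp
        have q2: "q2 \<ge> 0" unfolding q2_def by simp
        have c1: "condXY p1 x y = q1 / r1" unfolding condXY_def q1_def r1_def ..
        have cp: "condXY p x y = (a1 * q1 + a2 * q2) / (a1 * r1 + a2 * r2)"
          unfolding condXY_def q1_def q2_def r1_def r2_def
          by (simp add: mix mix_map[OF mix])
        have r1pos: "r1 > 0" using q1 r1 by linarith
        have num: "a1 * q1 + a2 * q2 \<le> (1 + K) * (a1 * q1)" using q2B by (simp add: algebra_simps)
        have den: "a1 * r1 \<le> a1 * r1 + a2 * r2" using a r2 by simp
        have numpos: "a1 * q1 + a2 * q2 > 0" using a q1 q2 by (simp add: add_pos_nonneg)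
        have "condXY p x y \<le> (1 + K) * (a1 * q1) / (a1 * r1)"
          unfolding cp using num den numpos a r1pos
          by (meson frac_le less_imp_le mult_pos_pos order_trans add_pos_nonneg Kpos zero_less_one less_imp_le)
        also have "\<dots> = (1 + K) * condXY p1 x y" unfolding c1 using a r1pos by (simp add: field_simps)
        finally have cle: "condXY p x y \<le> (1 + K) * condXY p1 x y" .
        have cpos: "condXY p x y > 0" unfolding cp using numpos a r1pos r2
          by (simp add: add_pos_nonneg)
        have c1pos: "condXY p1 x y > 0" unfolding c1 using q1 r1pos by simp
        have "gg p1 x y - c = log 2 (1 / ((1 + K) * condXY p1 x y))"
          unfolding gg_def c_def using Kpos c1pos by (simp add: log_divide log_mult)
        also have "\<dots> \<le> gg p x y" unfolding gg_def using cle cpos Kpos c1pos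
          by (simp add: frac_le)
        finally have "gg p x y > b" using yG unfolding G_def by simp
        thus ?thesis unfolding E_def by simp
      qed
    qed
    have "measure (measure_pmf p1) (Pair x ` G) \<le> measure (measure_pmf p1) (Pair x ` (E \<union> B \<union> Z0))"
      using sub by (intro measure_pmf.finite_measure_mono) auto
    also have "\<dots> \<le> measure (measure_pmf p1) (Pair x ` E) + measure (measure_pmf p1) (Pair x ` B)
                    + measure (measure_pmf p1) (Pair x ` Z0)"
      unfolding image_Un
    proof -
      let ?M = "measure_pmf p1"
      have "measure ?M (Pair x ` E \<union> Pair x ` B \<union> Pair x ` Z0) \<le> measure ?M (Pair x ` E \<union> Pair x ` B) + measure ?M (Pair x ` Z0)"
        by (rule measure_subadditive) (auto simp: measure_pmf.emeasure_finite)
      moreover have "measure ?M (Pair x ` E \<union> Pair x ` B) \<le> measure ?M (Pair x ` E) + measure ?M (Pair x ` B)"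
        by (rule measure_subadditive) (auto simp: measure_pmf.emeasure_finite)
      ultimately show "measure ?M (Pair x ` E \<union> Pair x ` B \<union> Pair x ` Z0) \<le> measure ?M (Pair x ` E) + measure ?M (Pair x ` B) + measure ?M (Pair x ` Z0)"
        by linarith
    qed
    also have "measure (measure_pmf p1) (Pair x ` Z0) = 0"
      unfolding measure_pair Z0_def by (rule infsum_0) simp
    also have "measure (measure_pmf p1) (Pair x ` B) \<le> a2 * m2 / (K * a1)"
    proof -
      have "measure (measure_pmf p1) (Pair x ` B) = (\<Sum>\<^sub>\<infinity> y\<in>B. pmf p1 (x, y))"
        by (rule measure_pair)
      also have "\<dots> \<le> (\<Sum>\<^sub>\<infinity> y\<in>B. (a2 / (K * a1)) * pmf p2 (x, y))"
      proof (rule infsum_mono)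
        show "(\<lambda>y. pmf p1 (x, y)) summable_on B" by (rule pair_summable)
        show "(\<lambda>y. (a2 / (K * a1)) * pmf p2 (x, y)) summable_on B"
          by (intro summable_on_cmult_right pair_summable)
        fix y assume "y \<in> B"
        thus "pmf p1 (x, y) \<le> (a2 / (K * a1)) * pmf p2 (x, y)"
          unfolding B_def using a Kpos by (simp add: field_simps)
      qed
      also have "\<dots> = (a2 / (K * a1)) * measure (measure_pmf p2) (Pair x ` B)"
        unfolding measure_pair by (rule infsum_cmult_right')
      also have "\<dots> \<le> (a2 / (K * a1)) * m2"
        unfolding m2_def using a Kpos by (intro mult_left_mono meas_pair_le_mX) auto
      finally show ?thesis by simp
    qed
    finally have A1: "measure (measure_pmf p1) (Pair x ` G) \<le> measure (measure_pmf p1) (Pair x ` E) + a2 * m2 / (K * a1)"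
      by simp
    have A2: "measure (measure_pmf p1) (Pair x ` G) > \<epsilon> * m1"
      using WG m1pos unfolding W_def m1_def by (simp add: field_simps)
    have A3: "measure (measure_pmf p) (Pair x ` E) \<ge> a1 * measure (measure_pmf p1) (Pair x ` E)"
      unfolding mix_measure[OF mix, of "Pair x ` E"] using a by simp
    have "measure (measure_pmf p) (Pair x ` E) > a1 * \<epsilon> * m1 - a2 * m2 / K"
    proof -
      have "a1 * (\<epsilon> * m1) < a1 * (measure (measure_pmf p1) (Pair x ` E) + a2 * m2 / (K * a1))"
        using A1 A2 a by simp
      hence "a1 * \<epsilon> * m1 < a1 * measure (measure_pmf p1) (Pair x ` E) + a2 * m2 / K"
        using a by (simp add: algebra_simps)
      thus ?thesis using A3 by simp
    qed
    moreover have "a1 * \<epsilon> * m1 - a2 * m2 / K \<ge> (\<tau> * \<epsilon> / 2) * m"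
    proof -
      have "a1 * \<epsilon> * m1 \<ge> \<tau> * \<epsilon> * m" using beta e unfolding m_def m1_def
        by (metis mult.commute mult.left_commute mult_left_mono less_imp_le)
      moreover have "a2 * m2 / K \<le> m / K" using mm a m1pos Kpos by (simp add: divide_right_mono)
      moreover have "m / K = (\<tau> * \<epsilon> / 2) * m" unfolding K_def by simp
      moreover have "(\<tau> * \<epsilon> / 2) * m = (\<tau> * \<epsilon> * m) / 2" by simp
      ultimately show ?thesis by linarith
    qed
    ultimately have "measure (measure_pmf p) (Pair x ` E) > (\<tau> * \<epsilon> / 2) * m" by linarith
    thus "W p x {y. gg p x y > b} > \<tau> * \<epsilon> / 2"
      using pos unfolding W_def E_def m_def by (simp add: field_simps)
  qed
qed

lemma linorder_t3:
  fixes S :: "'c::linear_continuum_topology set"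
  assumes S: "closed S" "y \<notin> S"
  shows "\<exists>U V. open U \<and> open V \<and> y \<in> U \<and> S \<subseteq> V \<and> U \<inter> V = {}"
proof -
  have T: "open (-S)" "y \<in> -S" using S by auto
  obtain LU LV where L: "open LU" "open LV" "y \<in> LU" "LU \<inter> LV = {}" "\<And>s. s \<in> S \<Longrightarrow> s < y \<Longrightarrow> s \<in> LV"
  proof (cases "\<exists>z. z < y")
    case True
    then obtain z where "z < y" by blast
    from open_left[OF T this] obtain a where a: "a < y" "{a<..y} \<subseteq> -S" by blast
    then obtain a' where a': "a < a'" "a' < y" using dense by blast
    show ?thesis
    proof (rule that[of "{a'<..}" "{..<a'}"])
      fix s assume "s \<in> S" "s < y"
      hence "s \<le> a" using a by (meson ComplD greaterThanAtMost_iff less_le_not_le not_le_imp_less subsetD)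
      thus "s \<in> {..<a'}" using a' by simp
    qed (use a' in auto)
  next
    case False
    show ?thesis by (rule that[of UNIV "{}"]) (use False in auto)
  qed
  obtain RU RV where R: "open RU" "open RV" "y \<in> RU" "RU \<inter> RV = {}" "\<And>s. s \<in> S \<Longrightarrow> y < s \<Longrightarrow> s \<in> RV"
  proof (cases "\<exists>z. y < z")
    case True
    then obtain z where "y < z" by blast
    from open_right[OF T this] obtain b where b: "b > y" "{y..<b} \<subseteq> -S" by blast
    then obtain b' where b': "y < b'" "b' < b" using dense by blast
    show ?thesis
    proof (rule that[of "{..<b'}" "{b'<..}"])
      fix s assume "s \<in> S" "y < s"
      hence "s \<ge> b" using b by (meson ComplD atLeastLessThan_iff less_le_not_le not_le_imp_less subsetD)
      thus "s \<in> {b'<..}" using b' by simp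
    qed (use b' in auto)
  next
    case False
    show ?thesis by (rule that[of UNIV "{}"]) (use False in auto)
  qed
  show ?thesis
  proof (intro exI conjI)
    show "open (LU \<inter> RU)" "open (LV \<union> RV)" using L R by auto
    show "y \<in> LU \<inter> RU" using L R by auto
    show "S \<subseteq> LV \<union> RV"
    proof
      fix s assume s: "s \<in> S"
      hence "s \<noteq> y" using S by auto
      thus "s \<in> LV \<union> RV" using L(5)[OF s] R(5)[OF s] by (meson UnI1 UnI2 linorder_neqE)
    qed
    show "LU \<inter> RU \<inter> (LV \<union> RV) = {}" using L R by auto
  qed
qed

instance ennreal :: t3_space
  by standard (rule linorder_t3)

lemma ennreal_infsum_Sigma:
  fixes g :: "'c \<times> 'd \<Rightarrow> ennreal"
  shows "infsum g (Sigma A B) = (\<Sum>\<^sub>\<infinity> x\<in>A. \<Sum>\<^sub>\<infinity> y\<in>B x. g (x, y))"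
proof -
  have "((\<lambda>x. \<Sum>\<^sub>\<infinity> y\<in>B x. g (x, y)) has_sum infsum g (Sigma A B)) A"
    by (rule has_sum_SigmaD[where f = g]) (auto intro: has_sum_infsum)
  thus ?thesis by (simp add: infsumI)
qed

lemma pushforward:
  fixes q :: "'c pmf" and f :: "'c \<Rightarrow> real"
  shows "(\<Sum>\<^sub>\<infinity> z\<in>A. ennreal (pmf (map_pmf f q) z * \<bar>z\<bar>)) = (\<Sum>\<^sub>\<infinity> w\<in>f -` A. ennreal (pmf q w * \<bar>f w\<bar>))"
proof -
  have "(\<Sum>\<^sub>\<infinity> z\<in>A. ennreal (pmf (map_pmf f q) z * \<bar>z\<bar>))
      = (\<Sum>\<^sub>\<infinity> z\<in>A. ennreal \<bar>z\<bar> * ennreal (measure (measure_pmf q) (f -` {z})))"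
    by (intro infsum_cong) (simp add: pmf_map ennreal_mult' mult.commute)
  also have "\<dots> = (\<Sum>\<^sub>\<infinity> z\<in>A. \<Sum>\<^sub>\<infinity> w\<in>f -` {z}. ennreal \<bar>z\<bar> * ennreal (pmf q w))"
    by (simp add: ennreal_measure_infsum ennreal_infsum_cmult)
  also have "\<dots> = (\<Sum>\<^sub>\<infinity> zw\<in>Sigma A (\<lambda>z. f -` {z}). ennreal \<bar>fst zw\<bar> * ennreal (pmf q (snd zw)))"
    by (subst ennreal_infsum_Sigma) simp
  also have "Sigma A (\<lambda>z. f -` {z}) = (\<lambda>w. (f w, w)) ` (f -` A)" by auto
  also have "(\<Sum>\<^sub>\<infinity> zw\<in>(\<lambda>w. (f w, w)) ` (f -` A). ennreal \<bar>fst zw\<bar> * ennreal (pmf q (snd zw)))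
      = (\<Sum>\<^sub>\<infinity> w\<in>f -` A. ennreal \<bar>f w\<bar> * ennreal (pmf q w))"
    by (subst infsum_reindex) (auto simp: inj_on_def o_def)
  also have "\<dots> = (\<Sum>\<^sub>\<infinity> w\<in>f -` A. ennreal (pmf q w * \<bar>f w\<bar>))"
    by (intro infsum_cong) (simp add: ennreal_mult' mult.commute)
  finally show ?thesis .
qed

lemma mX_sum: "(\<Sum>\<^sub>\<infinity> x. ennreal (pmf (map_pmf fst p) x)) = 1"
proof -
  have "(\<Sum>\<^sub>\<infinity> x. ennreal (pmf (map_pmf fst p) x)) = ennreal (measure (measure_pmf (map_pmf fst p)) UNIV)"
    by (rule ennreal_measure_infsum[symmetric])
  thus ?thesis by simp
qed

lemma fiber_sum: "(\<Sum>\<^sub>\<infinity> y. ennreal (pmf p (x, y))) = ennreal (pmf (map_pmf fst p) x)"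
  by (simp add: mX_eq ennreal_measure_pair)

lemma mh_nonneg:
  assumes "0 < \<epsilon>" "\<epsilon> < 1"
  shows "pmf (map_pmf fst p) x * hbar \<epsilon> p x \<ge> 0"
proof (cases "pmf (map_pmf fst p) x > 0")
  case True thus ?thesis using hbar_nonneg[OF True assms] by simp
next
  case False hence "pmf (map_pmf fst p) x = 0" using pmf_nonneg[of "map_pmf fst p" x] by linarith
  thus ?thesis by simp
qed

lemma PW:
  fixes p p1 p2 :: "('a \<times> 'b) pmf"
  assumes mix: "\<And>z. pmf p z = a1 * pmf p1 z + a2 * pmf p2 z"
    and a: "a1 > 0" "a2 > 0" "a1 + a2 = 1"
    and t: "\<tau> > 0" "\<tau> \<le> 1/2" and e: "0 < \<epsilon>" "\<epsilon> < 1"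
  shows "ennreal (a1 * (pmf (map_pmf fst p1) x * hbar \<epsilon> p1 x)) + ennreal (a2 * (pmf (map_pmf fst p2) x * hbar \<epsilon> p2 x))
    \<le> ennreal (pmf (map_pmf fst p) x * hbar (\<tau> * \<epsilon> / 2) p x)
       + ennreal (pmf (map_pmf fst p) x * log 2 (1 + 2 / (\<tau> * \<epsilon>)))
       + (if a1 * pmf (map_pmf fst p1) x < \<tau> * pmf (map_pmf fst p) x then ennreal (a1 * (pmf (map_pmf fst p1) x * hbar \<epsilon> p1 x)) else 0)
       + (if a2 * pmf (map_pmf fst p2) x < \<tau> * pmf (map_pmf fst p) x then ennreal (a2 * (pmf (map_pmf fst p2) x * hbar \<epsilon> p2 x)) else 0)"
proof -
  define m where "m = pmf (map_pmf fst p) x"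
  define m1 where "m1 = pmf (map_pmf fst p1) x"
  define m2 where "m2 = pmf (map_pmf fst p2) x"
  define h where "h = hbar (\<tau> * \<epsilon> / 2) p x"
  define h1 where "h1 = hbar \<epsilon> p1 x"
  define h2 where "h2 = hbar \<epsilon> p2 x"
  define c where "c = log 2 (1 + 2 / (\<tau> * \<epsilon>))"
  have mix': "\<And>z. pmf p z = a2 * pmf p2 z + a1 * pmf p1 z" using mix by (simp add: add.commute)
  have mm: "m = a1 * m1 + a2 * m2" unfolding m_def m1_def m2_def by (rule mix_map[OF mix])
  have m1nn: "m1 \<ge> 0" "m2 \<ge> 0" unfolding m1_def m2_def by auto
  have d: "0 < \<tau> * \<epsilon> / 2" "\<tau> * \<epsilon> / 2 < 1"
  proof -
    show "0 < \<tau> * \<epsilon> / 2" using t e by simp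
    have "\<tau> * \<epsilon> \<le> 1/2 * 1" using t e by (intro mult_mono) auto
    thus "\<tau> * \<epsilon> / 2 < 1" by simp
  qed
  have c0: "c \<ge> 0"
  proof -
    have "2 / (\<tau> * \<epsilon>) \<ge> 0" using t e by simp
    hence k: "1 \<le> 1 + 2 / (\<tau> * \<epsilon>)" by linarith
    show ?thesis unfolding c_def using k by (subst zero_le_log_cancel_iff) linarith+
  qed
  have X1: "m1 * h1 \<ge> 0" "m2 * h2 \<ge> 0" unfolding m1_def m2_def h1_def h2_def
    using mh_nonneg[OF e, of p1 x] mh_nonneg[OF e, of p2 x] by simp_all
  have X0: "m * h \<ge> 0" unfolding m_def h_def using mh_nonneg[OF d, of p x] by simp
  let ?L1 = "ennreal (a1 * (m1 * h1))" and ?L2 = "ennreal (a2 * (m2 * h2))"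
  let ?I1 = "(if a1 * m1 < \<tau> * m then ?L1 else 0)" and ?I2 = "(if a2 * m2 < \<tau> * m then ?L2 else 0)"
  have goal: "?L1 + ?L2 \<le> ennreal (m * h) + ennreal (m * c) + ?I1 + ?I2"
  proof (cases "m > 0")
    case False
    have "a1 * m1 \<ge> 0" "a2 * m2 \<ge> 0" using m1nn a by simp_all
    moreover have "m \<ge> 0" unfolding m_def by simp
    ultimately have "a1 * m1 = 0" "a2 * m2 = 0" using False mm by linarith+
    hence "m1 = 0" "m2 = 0" using a by simp_all
    thus ?thesis by simp
  next
    case mpos: True
    have hnn: "h \<ge> 0" unfolding h_def using hbar_nonneg[OF _ d] mpos m_def by simp
    have K1: "h \<ge> h1 - c" if "a1 * m1 \<ge> \<tau> * m"
      using KP[OF mix a(1,2) t(1) e _ that[unfolded m_def m1_def]] mpos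
      unfolding m_def h_def h1_def c_def by simp
    have K2: "h \<ge> h2 - c" if "a2 * m2 \<ge> \<tau> * m"
      using KP[OF mix' a(2,1) t(1) e _ that[unfolded m_def m2_def]] mpos
      unfolding m_def h_def h2_def c_def by simp
    have base: "ennreal (m * h) + ennreal (m * c) = ennreal (m * (h + c))"
    proof -
      have "m * h \<ge> 0" "m * c \<ge> 0" using mpos hnn c0 by simp_all
      hence "ennreal (m * h) + ennreal (m * c) = ennreal (m * h + m * c)" by (rule ennreal_plus[symmetric])
      thus ?thesis by (simp add: distrib_left)
    qed
    have B1: "a1 * (m1 * h1) \<le> a1 * m1 * (h + c)" if "a1 * m1 \<ge> \<tau> * m"
    proof -
      have "m1 * h1 \<le> m1 * (h + c)" using K1[OF that] m1nn by (intro mult_left_mono) auto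
      hence "a1 * (m1 * h1) \<le> a1 * (m1 * (h + c))" using a by simp
      thus ?thesis by (simp add: mult.assoc)
    qed
    have B2: "a2 * (m2 * h2) \<le> a2 * m2 * (h + c)" if "a2 * m2 \<ge> \<tau> * m"
    proof -
      have "m2 * h2 \<le> m2 * (h + c)" using K2[OF that] m1nn by (intro mult_left_mono) auto
      hence "a2 * (m2 * h2) \<le> a2 * (m2 * (h + c))" using a by simp
      thus ?thesis by (simp add: mult.assoc)
    qed
    have hc: "h + c \<ge> 0" using hnn c0 by simp
    have s1: "a1 * m1 * (h + c) \<le> m * (h + c)" using mm a m1nn hc by (simp add: mult_right_mono)
    have s2: "a2 * m2 * (h + c) \<le> m * (h + c)" using mm a m1nn hc by (simp add: mult_right_mono)
    consider "a1 * m1 \<ge> \<tau> * m" "a2 * m2 \<ge> \<tau> * m" | "a1 * m1 < \<tau> * m" "a2 * m2 \<ge> \<tau> * m"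
      | "a1 * m1 \<ge> \<tau> * m" "a2 * m2 < \<tau> * m"
    proof -
      have "\<not> (a1 * m1 < \<tau> * m \<and> a2 * m2 < \<tau> * m)"
      proof
        assume "a1 * m1 < \<tau> * m \<and> a2 * m2 < \<tau> * m"
        hence "m < 2 * \<tau> * m" using mm by linarith
        moreover have "2 * \<tau> * m \<le> 1 * m" using t mpos by (intro mult_right_mono) auto
        ultimately show False by simp
      qed
      thus ?thesis using that by linarith
    qed
    thus ?thesis
    proof cases
      case 1
      have "a1 * (m1 * h1) + a2 * (m2 * h2) \<le> m * (h + c)"
        using B1[OF 1(1)] B2[OF 1(2)] mm by (simp add: distrib_right)
      moreover have "?L1 + ?L2 = ennreal (a1 * (m1 * h1) + a2 * (m2 * h2))"
        using X1 a by (intro ennreal_plus[symmetric]) auto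
      ultimately have "?L1 + ?L2 \<le> ennreal (m * (h + c))"
        by (simp add: ennreal_leI)
      moreover have "ennreal (m * (h + c)) \<le> ennreal (m * h) + ennreal (m * c) + ?I1 + ?I2"
        unfolding base[symmetric] by (intro add_increasing2[OF zero_le] order_refl)
      ultimately show ?thesis by (rule order_trans)
    next
      case 2
      have "?L2 \<le> ennreal (m * (h + c))" using B2[OF 2(2)] s2 by (intro ennreal_leI) linarith
      hence "?L2 + ?L1 \<le> ennreal (m * h) + ennreal (m * c) + ?I1"
        using 2(1) base by (simp add: add_mono)
      hence "?L1 + ?L2 \<le> ennreal (m * h) + ennreal (m * c) + ?I1" by (simp add: add.commute)
      thus ?thesis by (rule add_increasing2[OF zero_le])
    next
      case 3
      have "?L1 \<le> ennreal (m * (h + c))" using B1[OF 3(1)] s1 by (intro ennreal_leI) linarith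
      hence "?L1 + ?L2 \<le> ennreal (m * h) + ennreal (m * c) + ?I2"
        using 3(2) base by (simp add: add_mono)
      also have "\<dots> \<le> ennreal (m * h) + ennreal (m * c) + ?I1 + ?I2"
        by (intro add_right_mono add_increasing2[OF zero_le] order_refl)
      finally show ?thesis .
    qed
  qed
  thus ?thesis unfolding m_def m1_def m2_def h_def h1_def h2_def c_def .
qed

lemma infsum_if_UNIV: "(\<Sum>\<^sub>\<infinity> x. if x \<in> S then f x else (0::ennreal)) = infsum f S"
  by (rule infsum_cong_neutral) auto

lemma infsum_add3:
  fixes f g h k :: "'c \<Rightarrow> ennreal"
  shows "(\<Sum>\<^sub>\<infinity> x\<in>A. f x + g x + h x + k x) = infsum f A + infsum g A + infsum h A + infsum k A"
  by (simp add: infsum_add)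

lemma SUMINEQ:
  fixes p p1 p2 :: "('a \<times> 'b) pmf"
  assumes mix: "\<And>z. pmf p z = a1 * pmf p1 z + a2 * pmf p2 z"
    and a: "a1 > 0" "a2 > 0" "a1 + a2 = 1"
    and t: "\<tau> > 0" "\<tau> \<le> 1/2" and e: "0 < \<epsilon>" "\<epsilon> < 1"
  shows "ennreal a1 * Hs_eps \<epsilon> p1 + ennreal a2 * Hs_eps \<epsilon> p2
    \<le> Hs_eps (\<tau> * \<epsilon> / 2) p + ennreal (log 2 (1 + 2 / (\<tau> * \<epsilon>)))
       + ennreal a1 * (\<Sum>\<^sub>\<infinity> x\<in>{x. a1 * pmf (map_pmf fst p1) x < \<tau> * pmf (map_pmf fst p) x}. ennreal (pmf (map_pmf fst p1) x * hbar \<epsilon> p1 x))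
       + ennreal a2 * (\<Sum>\<^sub>\<infinity> x\<in>{x. a2 * pmf (map_pmf fst p2) x < \<tau> * pmf (map_pmf fst p) x}. ennreal (pmf (map_pmf fst p2) x * hbar \<epsilon> p2 x))"
proof -
  define c where "c = log 2 (1 + 2 / (\<tau> * \<epsilon>))"
  have c0: "c \<ge> 0"
  proof -
    have "2 / (\<tau> * \<epsilon>) \<ge> 0" using t e by simp
    hence k: "1 \<le> 1 + 2 / (\<tau> * \<epsilon>)" by linarith
    show ?thesis unfolding c_def using k by (subst zero_le_log_cancel_iff) linarith+
  qed
  let ?m = "\<lambda>x. pmf (map_pmf fst p) x" and ?m1 = "\<lambda>x. pmf (map_pmf fst p1) x" and ?m2 = "\<lambda>x. pmf (map_pmf fst p2) x"
  let ?S1 = "{x. a1 * ?m1 x < \<tau> * ?m x}" and ?S2 = "{x. a2 * ?m2 x < \<tau> * ?m x}"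
  have X1a: "\<And>x. ?m1 x * hbar \<epsilon> p1 x \<ge> 0" by (rule mh_nonneg[OF e])
  have X1b: "\<And>x. ?m2 x * hbar \<epsilon> p2 x \<ge> 0" by (rule mh_nonneg[OF e])
  have "ennreal a1 * Hs_eps \<epsilon> p1 + ennreal a2 * Hs_eps \<epsilon> p2
      = (\<Sum>\<^sub>\<infinity> x. ennreal (a1 * (?m1 x * hbar \<epsilon> p1 x)) + ennreal (a2 * (?m2 x * hbar \<epsilon> p2 x)))"
    unfolding Hs_eps_def ennreal_infsum_cmult using a
    by (subst infsum_add) (auto simp: ennreal_mult')
  also have "\<dots> \<le> (\<Sum>\<^sub>\<infinity> x. ennreal (?m x * hbar (\<tau> * \<epsilon> / 2) p x) + ennreal (?m x * c)
       + (if x \<in> ?S1 then ennreal (a1 * (?m1 x * hbar \<epsilon> p1 x)) else 0)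
       + (if x \<in> ?S2 then ennreal (a2 * (?m2 x * hbar \<epsilon> p2 x)) else 0))"
  proof (rule ennreal_infsum_mono)
    fix x :: 'a
    show "ennreal (a1 * (?m1 x * hbar \<epsilon> p1 x)) + ennreal (a2 * (?m2 x * hbar \<epsilon> p2 x))
      \<le> ennreal (?m x * hbar (\<tau> * \<epsilon> / 2) p x) + ennreal (?m x * c)
       + (if x \<in> ?S1 then ennreal (a1 * (?m1 x * hbar \<epsilon> p1 x)) else 0)
       + (if x \<in> ?S2 then ennreal (a2 * (?m2 x * hbar \<epsilon> p2 x)) else 0)"
      using PW[OF mix a t e, of x] unfolding c_def by (simp only: mem_Collect_eq)
  qed simp
  also have "\<dots> = Hs_eps (\<tau> * \<epsilon> / 2) p + (\<Sum>\<^sub>\<infinity> x. ennreal (?m x * c))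
       + (\<Sum>\<^sub>\<infinity> x\<in>?S1. ennreal (a1 * (?m1 x * hbar \<epsilon> p1 x)))
       + (\<Sum>\<^sub>\<infinity> x\<in>?S2. ennreal (a2 * (?m2 x * hbar \<epsilon> p2 x)))"
    unfolding infsum_add3 Hs_eps_def infsum_if_UNIV ..
  also have "(\<Sum>\<^sub>\<infinity> x\<in>?S1. ennreal (a1 * (?m1 x * hbar \<epsilon> p1 x)))
      = ennreal a1 * (\<Sum>\<^sub>\<infinity> x\<in>?S1. ennreal (?m1 x * hbar \<epsilon> p1 x))"
    unfolding ennreal_infsum_cmult using a by (simp add: ennreal_mult')
  also have "(\<Sum>\<^sub>\<infinity> x\<in>?S2. ennreal (a2 * (?m2 x * hbar \<epsilon> p2 x)))
      = ennreal a2 * (\<Sum>\<^sub>\<infinity> x\<in>?S2. ennreal (?m2 x * hbar \<epsilon> p2 x))"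
    unfolding ennreal_infsum_cmult using a by (simp add: ennreal_mult')
  also have "(\<Sum>\<^sub>\<infinity> x. ennreal (?m x * c)) = ennreal c"
  proof -
    have "(\<Sum>\<^sub>\<infinity> x. ennreal (?m x * c)) = (\<Sum>\<^sub>\<infinity> x. ennreal c * ennreal (?m x))"
      using c0 by (simp add: ennreal_mult' mult.commute)
    also have "\<dots> = ennreal c" unfolding ennreal_infsum_cmult[symmetric] mX_sum by simp
    finally show ?thesis .
  qed
  finally show ?thesis unfolding c_def .
qed

lemma EB:
  fixes P :: "nat \<Rightarrow> ('a \<times> 'b) pmf"
  assumes n: "n \<ge> 1" and e: "0 < \<epsilon>" "\<epsilon> < 1" and u: "u \<ge> 0"
  shows "ennreal \<epsilon> * (\<Sum>\<^sub>\<infinity> x\<in>S. ennreal (pmf (map_pmf fst (P n)) x * hbar \<epsilon> (P n) x))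
     \<le> ennreal (real n * u) * (\<Sum>\<^sub>\<infinity> x\<in>S. ennreal (pmf (map_pmf fst (P n)) x))
        + ennreal (real n) * (\<Sum>\<^sub>\<infinity> z\<in>{z. u \<le> \<bar>z\<bar>}. ennreal (pmf (Zdist P n) z * \<bar>z\<bar>))"
proof -
  define q where "q = P n"
  define Zf where "Zf = (\<lambda>(x, y). (1 / real n) * log 2 (1 / condXY (P n) x y))"
  define A where "A = {z::real. u \<le> \<bar>z\<bar>}"
  have npos: "real n > 0" using n by simp
  have gZ: "gg q x y = real n * Zf (x, y)" for x y
    unfolding gg_def Zf_def q_def using npos by simp
  let ?m = "\<lambda>x. pmf (map_pmf fst q) x"
  have "ennreal \<epsilon> * (\<Sum>\<^sub>\<infinity> x\<in>S. ennreal (?m x * hbar \<epsilon> q x))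
      = (\<Sum>\<^sub>\<infinity> x\<in>S. ennreal (\<epsilon> * ?m x * hbar \<epsilon> q x))"
    unfolding ennreal_infsum_cmult using e by (simp add: ennreal_mult'[symmetric] mult.assoc)
  also have "\<dots> \<le> (\<Sum>\<^sub>\<infinity> x\<in>S. \<Sum>\<^sub>\<infinity> y. ennreal (pmf q (x, y) * gg q x y))"
  proof (rule ennreal_infsum_mono)
    fix x assume "x \<in> S"
    show "ennreal (\<epsilon> * ?m x * hbar \<epsilon> q x) \<le> (\<Sum>\<^sub>\<infinity> y. ennreal (pmf q (x, y) * gg q x y))"
    proof (cases "?m x > 0")
      case True thus ?thesis by (rule H3[OF _ e])
    next
      case False hence "?m x = 0" using pmf_nonneg[of "map_pmf fst q" x] by linarith
      thus ?thesis by simp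
    qed
  qed simp
  also have "\<dots> \<le> (\<Sum>\<^sub>\<infinity> x\<in>S. \<Sum>\<^sub>\<infinity> y. ennreal (real n * u) * ennreal (pmf q (x, y))
                  + (if (x, y) \<in> Zf -` A then ennreal (real n) * ennreal (pmf q (x, y) * \<bar>Zf (x, y)\<bar>) else 0))"
  proof (intro ennreal_infsum_mono order_refl)
    fix x y
    have qn: "pmf q (x, y) \<ge> 0" by simp
    show "ennreal (pmf q (x, y) * gg q x y) \<le> ennreal (real n * u) * ennreal (pmf q (x, y))
                  + (if (x, y) \<in> Zf -` A then ennreal (real n) * ennreal (pmf q (x, y) * \<bar>Zf (x, y)\<bar>) else 0)"
    proof (cases "(x, y) \<in> Zf -` A")
      case True
      have "pmf q (x, y) * gg q x y \<le> real n * (pmf q (x, y) * \<bar>Zf (x, y)\<bar>)"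
        unfolding gZ using npos qn by (simp add: mult_left_mono mult.left_commute)
      hence "ennreal (pmf q (x, y) * gg q x y) \<le> ennreal (real n) * ennreal (pmf q (x, y) * \<bar>Zf (x, y)\<bar>)"
        by (simp add: ennreal_mult'[symmetric] ennreal_leI)
      thus ?thesis using True by (simp add: add_increasing)
    next
      case False
      hence "\<bar>Zf (x, y)\<bar> < u" unfolding A_def by simp
      hence "pmf q (x, y) * gg q x y \<le> real n * u * pmf q (x, y)"
        unfolding gZ using npos qn
        by (smt (verit, ccfv_SIG) abs_ge_self mult.commute mult_left_mono mult_right_mono)
      hence "ennreal (pmf q (x, y) * gg q x y) \<le> ennreal (real n * u) * ennreal (pmf q (x, y))"
        using npos u by (simp add: ennreal_mult'[symmetric] ennreal_leI)
      thus ?thesis using False by simp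
    qed
  qed
  also have "\<dots> = ennreal (real n * u) * (\<Sum>\<^sub>\<infinity> x\<in>S. ennreal (?m x))
      + (\<Sum>\<^sub>\<infinity> x\<in>S. \<Sum>\<^sub>\<infinity> y. (if (x, y) \<in> Zf -` A then ennreal (real n) * ennreal (pmf q (x, y) * \<bar>Zf (x, y)\<bar>) else 0))"
    by (simp add: infsum_add ennreal_infsum_cmult[symmetric] fiber_sum)
  also have "(\<Sum>\<^sub>\<infinity> x\<in>S. \<Sum>\<^sub>\<infinity> y. (if (x, y) \<in> Zf -` A then ennreal (real n) * ennreal (pmf q (x, y) * \<bar>Zf (x, y)\<bar>) else 0))
      \<le> (\<Sum>\<^sub>\<infinity> x. \<Sum>\<^sub>\<infinity> y. (if (x, y) \<in> Zf -` A then ennreal (real n) * ennreal (pmf q (x, y) * \<bar>Zf (x, y)\<bar>) else 0))"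
    by (rule ennreal_infsum_mono) auto
  also have "\<dots> = (\<Sum>\<^sub>\<infinity> w. (if w \<in> Zf -` A then ennreal (real n) * ennreal (pmf q w * \<bar>Zf w\<bar>) else 0))"
    using ennreal_infsum_Sigma[of "\<lambda>w. (if w \<in> Zf -` A then ennreal (real n) * ennreal (pmf q w * \<bar>Zf w\<bar>) else 0)" UNIV "\<lambda>_. UNIV"]
    by simp
  also have "\<dots> = ennreal (real n) * (\<Sum>\<^sub>\<infinity> w\<in>Zf -` A. ennreal (pmf q w * \<bar>Zf w\<bar>))"
    unfolding infsum_if_UNIV ennreal_infsum_cmult ..
  also have "(\<Sum>\<^sub>\<infinity> w\<in>Zf -` A. ennreal (pmf q w * \<bar>Zf w\<bar>)) = (\<Sum>\<^sub>\<infinity> z\<in>A. ennreal (pmf (Zdist P n) z * \<bar>z\<bar>))"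
    unfolding pushforward[symmetric] Zdist_def Zf_def q_def ..
  finally show ?thesis unfolding q_def A_def by (simp add: add_mono)
qed

lemma Hs_eps_antimono:
  assumes "0 < a" "a \<le> b" "b < 1"
  shows "Hs_eps b p \<le> Hs_eps a p"
  unfolding Hs_eps_def
proof (rule ennreal_infsum_mono)
  fix x
  show "ennreal (pmf (map_pmf fst p) x * hbar b p x) \<le> ennreal (pmf (map_pmf fst p) x * hbar a p x)"
  proof (cases "pmf (map_pmf fst p) x > 0")
    case True
    have "hbar b p x \<le> hbar a p x" by (rule hbar_antimono[OF True assms])
    thus ?thesis using True by (intro ennreal_leI mult_left_mono) auto
  next
    case False hence "pmf (map_pmf fst p) x = 0" using pmf_nonneg[of "map_pmf fst p" x] by linarith
    thus ?thesis by simp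
  qed
qed simp

lemma mono_lim:
  fixes f :: "real \<Rightarrow> ennreal"
  assumes mono: "\<And>a b. 0 < a \<Longrightarrow> a \<le> b \<Longrightarrow> b < 1 \<Longrightarrow> f b \<le> f a"
  shows "Lim (at_right 0) f = (SUP e\<in>{0<..<1}. f e)"
proof -
  let ?S = "SUP e\<in>{0<..<1}. f e"
  have "(f \<longlongrightarrow> ?S) (at_right 0)"
  proof (rule order_tendstoI)
    fix y assume "y < ?S"
    then obtain e0 where e0: "e0 \<in> {0<..<1}" "y < f e0" by (auto simp: less_SUP_iff)
    have "eventually (\<lambda>e. 0 < e \<and> e < e0) (at_right (0::real))"
      unfolding eventually_at_right_field using e0 by auto
    thus "eventually (\<lambda>e. y < f e) (at_right 0)"
    proof (rule eventually_mono)
      fix e assume "0 < e \<and> e < e0"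
      hence "f e0 \<le> f e" using e0 by (intro mono) auto
      thus "y < f e" using e0 by simp
    qed
  next
    fix y assume "?S < y"
    have "eventually (\<lambda>e. 0 < e \<and> e < 1) (at_right (0::real))"
      unfolding eventually_at_right_field by (intro exI[of _ 1]) auto
    thus "eventually (\<lambda>e. f e < y) (at_right 0)"
    proof (rule eventually_mono)
      fix e :: real assume "0 < e \<and> e < 1"
      hence "f e \<le> ?S" by (intro SUP_upper) auto
      thus "f e < y" using \<open>?S < y\<close> by simp
    qed
  qed
  thus ?thesis by (rule tendsto_Lim[OF trivial_limit_at_right_real])
qed

lemma EB2:
  fixes Q :: "nat \<Rightarrow> ('a \<times> 'b) pmf"
  assumes n: "n \<ge> 1" and e: "0 < \<epsilon>" "\<epsilon> < 1" and u: "u \<ge> 0" and a: "a > 0" and t: "\<tau> \<ge> 0"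
    and Ssum: "(\<Sum>\<^sub>\<infinity> x\<in>S. ennreal (pmf (map_pmf fst (Q n)) x)) \<le> ennreal (\<tau> / a)"
    and T: "(\<Sum>\<^sub>\<infinity> z\<in>{z. u \<le> \<bar>z\<bar>}. ennreal (pmf (Zdist Q n) z * \<bar>z\<bar>)) \<le> T"
  shows "ennreal (1 / real n) * (ennreal a * (\<Sum>\<^sub>\<infinity> x\<in>S. ennreal (pmf (map_pmf fst (Q n)) x * hbar \<epsilon> (Q n) x)))
      \<le> ennreal (u * \<tau> / \<epsilon>) + ennreal (a / \<epsilon>) * T"
proof -
  define E where "E = (\<Sum>\<^sub>\<infinity> x\<in>S. ennreal (pmf (map_pmf fst (Q n)) x * hbar \<epsilon> (Q n) x))"
  have npos: "real n > 0" using n by simp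
  have "ennreal \<epsilon> * E \<le> ennreal (real n * u) * (\<Sum>\<^sub>\<infinity> x\<in>S. ennreal (pmf (map_pmf fst (Q n)) x))
        + ennreal (real n) * (\<Sum>\<^sub>\<infinity> z\<in>{z. u \<le> \<bar>z\<bar>}. ennreal (pmf (Zdist Q n) z * \<bar>z\<bar>))"
    unfolding E_def by (rule EB[OF n e u])
  also have "\<dots> \<le> ennreal (real n * u) * ennreal (\<tau> / a) + ennreal (real n) * T"
    by (intro add_mono mult_left_mono Ssum T) auto
  finally have Y: "ennreal \<epsilon> * E \<le> ennreal (real n * u) * ennreal (\<tau> / a) + ennreal (real n) * T" .
  have "ennreal (1 / real n) * (ennreal a * E) = ennreal (a / (real n * \<epsilon>)) * (ennreal \<epsilon> * E)"
  proof -
    have "ennreal (1 / real n) * ennreal a = ennreal (a / real n)"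
      using a npos by (simp add: ennreal_mult[symmetric])
    moreover have "ennreal (a / (real n * \<epsilon>)) * ennreal \<epsilon> = ennreal (a / real n)"
      using a npos e by (simp add: ennreal_mult[symmetric])
    ultimately show ?thesis by (simp add: mult.assoc[symmetric])
  qed
  also have "\<dots> \<le> ennreal (a / (real n * \<epsilon>)) * (ennreal (real n * u) * ennreal (\<tau> / a) + ennreal (real n) * T)"
    by (intro mult_left_mono Y) simp
  also have "\<dots> = ennreal (a / (real n * \<epsilon>)) * (ennreal (real n * u) * ennreal (\<tau> / a))
                    + ennreal (a / (real n * \<epsilon>)) * (ennreal (real n) * T)"
    by (rule distrib_left)
  also have "ennreal (real n * u) * ennreal (\<tau> / a) = ennreal (real n * u * (\<tau> / a))"
    by (rule ennreal_mult[symmetric]) (use npos u t a in auto)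
  also have "ennreal (a / (real n * \<epsilon>)) * ennreal (real n * u * (\<tau> / a)) = ennreal (a / (real n * \<epsilon>) * (real n * u * (\<tau> / a)))"
    by (rule ennreal_mult[symmetric]) (use npos u t a e in auto)
  also have "a / (real n * \<epsilon>) * (real n * u * (\<tau> / a)) = u * \<tau> / \<epsilon>" using a npos e by (simp add: field_simps)
  also have "ennreal (a / (real n * \<epsilon>)) * (ennreal (real n) * T) = ennreal (a / (real n * \<epsilon>)) * ennreal (real n) * T"
    by (simp add: mult.assoc)
  also have "ennreal (a / (real n * \<epsilon>)) * ennreal (real n) = ennreal (a / (real n * \<epsilon>) * real n)"
    by (rule ennreal_mult[symmetric]) (use npos a e in auto)
  also have "a / (real n * \<epsilon>) * real n = a / \<epsilon>" using npos by (simp add: field_simps)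
  finally show ?thesis unfolding E_def .
qed

lemma Sbound:
  assumes a: "a1 > 0" and t: "\<tau> \<ge> 0"
  shows "(\<Sum>\<^sub>\<infinity> x\<in>{x. a1 * pmf (map_pmf fst p1) x < \<tau> * pmf (map_pmf fst p) x}. ennreal (pmf (map_pmf fst p1) x)) \<le> ennreal (\<tau> / a1)"
proof -
  have "(\<Sum>\<^sub>\<infinity> x\<in>{x. a1 * pmf (map_pmf fst p1) x < \<tau> * pmf (map_pmf fst p) x}. ennreal (pmf (map_pmf fst p1) x))
      \<le> (\<Sum>\<^sub>\<infinity> x. ennreal (\<tau> / a1) * ennreal (pmf (map_pmf fst p) x))"
  proof (rule ennreal_infsum_mono)
    fix x assume "x \<in> {x. a1 * pmf (map_pmf fst p1) x < \<tau> * pmf (map_pmf fst p) x}"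
    hence "pmf (map_pmf fst p1) x \<le> (\<tau> / a1) * pmf (map_pmf fst p) x" using a by (simp add: field_simps)
    thus "ennreal (pmf (map_pmf fst p1) x) \<le> ennreal (\<tau> / a1) * ennreal (pmf (map_pmf fst p) x)"
      using a t by (simp add: ennreal_mult[symmetric] ennreal_leI)
  qed simp
  also have "\<dots> = ennreal (\<tau> / a1)" unfolding ennreal_infsum_cmult[symmetric] mX_sum by simp
  finally show ?thesis .
qed

lemma PERN:
  fixes P P1 P2 :: "nat \<Rightarrow> ('a \<times> 'b) pmf"
  assumes mix: "\<And>z. pmf (P n) z = a1 * pmf (P1 n) z + a2 * pmf (P2 n) z"
    and a: "a1 > 0" "a2 > 0" "a1 + a2 = 1"
    and t: "\<tau> > 0" "\<tau> \<le> 1/2" and e: "0 < \<epsilon>" "\<epsilon> < 1" and u: "u \<ge> 0" and n: "n \<ge> 1"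
    and T1: "(\<Sum>\<^sub>\<infinity> z\<in>{z. u \<le> \<bar>z\<bar>}. ennreal (pmf (Zdist P1 n) z * \<bar>z\<bar>)) \<le> T1"
    and T2: "(\<Sum>\<^sub>\<infinity> z\<in>{z. u \<le> \<bar>z\<bar>}. ennreal (pmf (Zdist P2 n) z * \<bar>z\<bar>)) \<le> T2"
  shows "ennreal (a1 / real n) * Hs_eps \<epsilon> (P1 n) + ennreal (a2 / real n) * Hs_eps \<epsilon> (P2 n)
     \<le> ennreal (1 / real n) * Hs_eps (\<tau> * \<epsilon> / 2) (P n) + ennreal (log 2 (1 + 2 / (\<tau> * \<epsilon>)) / real n)
       + (ennreal (u * \<tau> / \<epsilon>) + ennreal (a1 / \<epsilon>) * T1) + (ennreal (u * \<tau> / \<epsilon>) + ennreal (a2 / \<epsilon>) * T2)"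
proof -
  define c where "c = log 2 (1 + 2 / (\<tau> * \<epsilon>))"
  have c0: "c \<ge> 0"
  proof -
    have "2 / (\<tau> * \<epsilon>) \<ge> 0" using t e by simp
    hence k: "1 \<le> 1 + 2 / (\<tau> * \<epsilon>)" by linarith
    show ?thesis unfolding c_def using k by (subst zero_le_log_cancel_iff) linarith+
  qed
  have npos: "real n > 0" using n by simp
  define E1 where "E1 = (\<Sum>\<^sub>\<infinity> x\<in>{x. a1 * pmf (map_pmf fst (P1 n)) x < \<tau> * pmf (map_pmf fst (P n)) x}. ennreal (pmf (map_pmf fst (P1 n)) x * hbar \<epsilon> (P1 n) x))"
  define E2 where "E2 = (\<Sum>\<^sub>\<infinity> x\<in>{x. a2 * pmf (map_pmf fst (P2 n)) x < \<tau> * pmf (map_pmf fst (P n)) x}. ennreal (pmf (map_pmf fst (P2 n)) x * hbar \<epsilon> (P2 n) x))"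
  define i where "i = ennreal (1 / real n)"
  have ia1: "ennreal (a1 / real n) = i * ennreal a1" unfolding i_def
    by (subst ennreal_mult[symmetric]) (use a npos in auto)
  have ia2: "ennreal (a2 / real n) = i * ennreal a2" unfolding i_def
    by (subst ennreal_mult[symmetric]) (use a npos in auto)
  have ic: "i * ennreal c = ennreal (c / real n)" unfolding i_def
    by (subst ennreal_mult[symmetric]) (use c0 npos in auto)
  have "ennreal (a1 / real n) * Hs_eps \<epsilon> (P1 n) + ennreal (a2 / real n) * Hs_eps \<epsilon> (P2 n)
      = i * (ennreal a1 * Hs_eps \<epsilon> (P1 n) + ennreal a2 * Hs_eps \<epsilon> (P2 n))"
    unfolding ia1 ia2 by (simp add: distrib_left mult.assoc)
  also have "\<dots> \<le> i * (Hs_eps (\<tau> * \<epsilon> / 2) (P n) + ennreal c + ennreal a1 * E1 + ennreal a2 * E2)"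
    unfolding c_def E1_def E2_def by (intro mult_left_mono SUMINEQ[OF mix a t e]) simp
  also have "\<dots> = i * Hs_eps (\<tau> * \<epsilon> / 2) (P n) + i * ennreal c + i * (ennreal a1 * E1) + i * (ennreal a2 * E2)"
    by (simp add: distrib_left)
  also have "\<dots> \<le> i * Hs_eps (\<tau> * \<epsilon> / 2) (P n) + ennreal (c / real n)
       + (ennreal (u * \<tau> / \<epsilon>) + ennreal (a1 / \<epsilon>) * T1) + (ennreal (u * \<tau> / \<epsilon>) + ennreal (a2 / \<epsilon>) * T2)"
  proof (intro add_mono order_refl)
    show "i * ennreal c \<le> ennreal (c / real n)" unfolding ic ..
    show "i * (ennreal a1 * E1) \<le> ennreal (u * \<tau> / \<epsilon>) + ennreal (a1 / \<epsilon>) * T1"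
      unfolding i_def E1_def
      by (rule EB2[OF n e u a(1) _ Sbound[OF a(1)] T1]) (use t in auto)
    show "i * (ennreal a2 * E2) \<le> ennreal (u * \<tau> / \<epsilon>) + ennreal (a2 / \<epsilon>) * T2"
      unfolding i_def E2_def
      by (rule EB2[OF n e u a(2) _ Sbound[OF a(2)] T2]) (use t in auto)
  qed
  finally show ?thesis unfolding i_def c_def .
qed

lemma c_nonneg:
  assumes "\<tau> > 0" "\<epsilon> > 0"
  shows "log 2 (1 + 2 / (\<tau> * \<epsilon>)) \<ge> 0"
proof -
  have "2 / (\<tau> * \<epsilon>) \<ge> 0" using assms by simp
  hence k: "1 \<le> 1 + 2 / (\<tau> * \<epsilon>)" by linarith
  show ?thesis using k by (subst zero_le_log_cancel_iff) linarith+
qed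

theorem theorem10:
  fixes P1 P2 P :: "nat \<Rightarrow> ('a::countable list \<times> 'b::countable list) pmf"
    and \<alpha>1 \<alpha>2 :: real
  assumes "general_source P1" and "general_source P2"
    and "unif_integrable P1" and "unif_integrable P2"
    and "\<alpha>1 > 0" and "\<alpha>2 > 0" and "\<alpha>1 + \<alpha>2 = 1"
    and "\<And>n z. pmf (P n) z = \<alpha>1 * pmf (P1 n) z + \<alpha>2 * pmf (P2 n) z"
  shows "Hs P \<ge> Lim (at_right 0) (\<lambda>\<epsilon>. limsup (\<lambda>n.
            ennreal (\<alpha>1 / real n) * Hs_eps \<epsilon> (P1 n) + ennreal (\<alpha>2 / real n) * Hs_eps \<epsilon> (P2 n)))"
proof -
  note a = assms(5,6,7)
  note mix = assms(8)
  define F where "F = (\<lambda>\<epsilon>. limsup (\<lambda>n. ennreal (1 / real n) * Hs_eps \<epsilon> (P n)))"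
  define R where "R = (\<lambda>\<epsilon>. limsup (\<lambda>n. ennreal (\<alpha>1 / real n) * Hs_eps \<epsilon> (P1 n) + ennreal (\<alpha>2 / real n) * Hs_eps \<epsilon> (P2 n)))"
  have Fmono: "F b \<le> F a" if "0 < a" "a \<le> b" "b < 1" for a b
    unfolding F_def by (intro Limsup_mono always_eventually allI mult_left_mono Hs_eps_antimono that) simp
  have Rmono: "R b \<le> R a" if "0 < a" "a \<le> b" "b < 1" for a b
    unfolding R_def by (intro Limsup_mono always_eventually allI add_mono mult_left_mono Hs_eps_antimono that) simp_all
  have HsP: "Hs P = (SUP e\<in>{0<..<1}. F e)" unfolding Hs_def F_def[symmetric] by (rule mono_lim[OF Fmono])
  have LR: "Lim (at_right 0) R = (SUP e\<in>{0<..<1}. R e)" by (rule mono_lim[OF Rmono])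
  have main: "R \<epsilon> \<le> (SUP e\<in>{0<..<1}. F e)" if \<epsilon>: "0 < \<epsilon>" "\<epsilon> < 1" for \<epsilon>
  proof (rule ennreal_le_epsilon)
    fix e :: real assume e: "0 < e"
    define T1 where "T1 = (\<lambda>u::real. SUP n\<in>{1::nat..}. \<Sum>\<^sub>\<infinity> z\<in>{z. \<bar>z\<bar> \<ge> u}. ennreal (pmf (Zdist P1 n) z * \<bar>z\<bar>))"
    define T2 where "T2 = (\<lambda>u::real. SUP n\<in>{1::nat..}. \<Sum>\<^sub>\<infinity> z\<in>{z. \<bar>z\<bar> \<ge> u}. ennreal (pmf (Zdist P2 n) z * \<bar>z\<bar>))"
    have UI1: "(T1 \<longlongrightarrow> 0) at_top" using assms(3) unfolding unif_integrable_def T1_def .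
    have UI2: "(T2 \<longlongrightarrow> 0) at_top" using assms(4) unfolding unif_integrable_def T2_def .
    have pos: "0 < ennreal (\<epsilon> * e / 6)" using \<epsilon> e by simp
    have "eventually (\<lambda>u. T1 u < ennreal (\<epsilon> * e / 6)) at_top" by (rule order_tendstoD(2)[OF UI1 pos])
    moreover have "eventually (\<lambda>u. T2 u < ennreal (\<epsilon> * e / 6)) at_top" by (rule order_tendstoD(2)[OF UI2 pos])
    ultimately have "eventually (\<lambda>u. T1 u < ennreal (\<epsilon> * e / 6) \<and> T2 u < ennreal (\<epsilon> * e / 6)) at_top"
      by (rule eventually_conj)
    then obtain U where U: "\<And>u. u \<ge> U \<Longrightarrow> T1 u < ennreal (\<epsilon> * e / 6) \<and> T2 u < ennreal (\<epsilon> * e / 6)"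
      unfolding eventually_at_top_linorder by blast
    define u where "u = max U 0"
    have u0: "u \<ge> 0" unfolding u_def by simp
    have Tu: "T1 u < ennreal (\<epsilon> * e / 6)" "T2 u < ennreal (\<epsilon> * e / 6)" using U[of u] unfolding u_def by auto
    define \<tau> where "\<tau> = min (1/2) (e * \<epsilon> / (6 * (u + 1)))"
    have t1: "\<tau> > 0" unfolding \<tau>_def using e \<epsilon> u0 by auto
    have t2: "\<tau> \<le> 1/2" unfolding \<tau>_def by (rule min.cobounded1)
    note t = t1 t2
    have ut: "u * \<tau> / \<epsilon> \<le> e / 6"
    proof -
      have "u * \<tau> \<le> (u + 1) * \<tau>" using t by simp
      also have "\<dots> \<le> (u + 1) * (e * \<epsilon> / (6 * (u + 1)))" unfolding \<tau>_def using u0 by (intro mult_left_mono) auto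
      also have "\<dots> = e * \<epsilon> / 6"
      proof -
        have "u + 1 \<noteq> 0" using u0 by simp
        thus ?thesis by (simp add: field_simps)
      qed
      finally show ?thesis using \<epsilon> by (simp add: divide_le_eq mult.commute)
    qed
    define \<delta> where "\<delta> = \<tau> * \<epsilon> / 2"
    have d: "0 < \<delta>" "\<delta> < 1"
    proof -
      show "0 < \<delta>" unfolding \<delta>_def using t \<epsilon> by simp
      have "\<tau> * \<epsilon> \<le> 1/2 * 1" using t \<epsilon> by (intro mult_mono) auto
      thus "\<delta> < 1" unfolding \<delta>_def by simp
    qed
    define c where "c = log 2 (1 + 2 / (\<tau> * \<epsilon>))"
    have c0: "c \<ge> 0" unfolding c_def by (rule c_nonneg[OF t(1) \<epsilon>(1)])
    define N where "N = nat \<lceil>3 * c / e\<rceil> + 1"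
    have N1: "N \<ge> 1" unfolding N_def by simp
    have NN: "real N \<ge> 3 * c / e" unfolding N_def by linarith
    have cn: "c / real n \<le> e / 3" if "n \<ge> N" for n
    proof -
      have "real n \<ge> 3 * c / e" using NN that by linarith
      hence "3 * c \<le> e * real n" using e by (simp add: divide_le_eq mult.commute)
      moreover have "real n > 0" using N1 that by simp
      ultimately show ?thesis by (simp add: divide_le_eq field_simps)
    qed
    have ae: "ennreal (\<alpha>1 / \<epsilon>) * T1 u \<le> ennreal (e / 6)" "ennreal (\<alpha>2 / \<epsilon>) * T2 u \<le> ennreal (e / 6)"
    proof -
      have "ennreal (\<alpha>1 / \<epsilon>) * T1 u \<le> ennreal (\<alpha>1 / \<epsilon>) * ennreal (\<epsilon> * e / 6)"
        using Tu by (intro mult_left_mono) auto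
      also have "\<dots> = ennreal (\<alpha>1 / \<epsilon> * (\<epsilon> * e / 6))"
        by (rule ennreal_mult[symmetric]) (use a \<epsilon> e in auto)
      also have "\<alpha>1 / \<epsilon> * (\<epsilon> * e / 6) \<le> e / 6" using a \<epsilon> e by (simp add: field_simps)
      finally show "ennreal (\<alpha>1 / \<epsilon>) * T1 u \<le> ennreal (e / 6)" by (simp add: ennreal_leI)
      have "ennreal (\<alpha>2 / \<epsilon>) * T2 u \<le> ennreal (\<alpha>2 / \<epsilon>) * ennreal (\<epsilon> * e / 6)"
        using Tu by (intro mult_left_mono) auto
      also have "\<dots> = ennreal (\<alpha>2 / \<epsilon> * (\<epsilon> * e / 6))"
        by (rule ennreal_mult[symmetric]) (use a \<epsilon> e in auto)
      also have "\<alpha>2 / \<epsilon> * (\<epsilon> * e / 6) \<le> e / 6" using a \<epsilon> e by (simp add: field_simps)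
      finally show "ennreal (\<alpha>2 / \<epsilon>) * T2 u \<le> ennreal (e / 6)" by (simp add: ennreal_leI)
    qed
    have esum: "ennreal (e / 3) + (ennreal (e / 6) + ennreal (e / 6)) + (ennreal (e / 6) + ennreal (e / 6)) = ennreal e"
    proof -
      have h6: "ennreal (e / 6) + ennreal (e / 6) = ennreal (e / 3)"
        using e by (subst ennreal_plus[symmetric]) auto
      have h3: "ennreal (e / 3) + ennreal (e / 3) = ennreal (2 * e / 3)"
        using e by (subst ennreal_plus[symmetric]) auto
      have h33: "ennreal (2 * e / 3) + ennreal (e / 3) = ennreal e"
        using e by (subst ennreal_plus[symmetric]) auto
      show ?thesis unfolding h6 h3 h33 ..
    qed
    have bound: "ennreal (\<alpha>1 / real n) * Hs_eps \<epsilon> (P1 n) + ennreal (\<alpha>2 / real n) * Hs_eps \<epsilon> (P2 n)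
        \<le> ennreal e + ennreal (1 / real n) * Hs_eps \<delta> (P n)" if n: "n \<ge> N" for n
    proof -
      have n1: "n \<ge> 1" using n N1 by simp
      have T1n: "(\<Sum>\<^sub>\<infinity> z\<in>{z. u \<le> \<bar>z\<bar>}. ennreal (pmf (Zdist P1 n) z * \<bar>z\<bar>)) \<le> T1 u"
        unfolding T1_def by (rule SUP_upper[where f = "\<lambda>n. \<Sum>\<^sub>\<infinity> z\<in>{z. \<bar>z\<bar> \<ge> u}. ennreal (pmf (Zdist P1 n) z * \<bar>z\<bar>)"]) (use n1 in auto)
      have T2n: "(\<Sum>\<^sub>\<infinity> z\<in>{z. u \<le> \<bar>z\<bar>}. ennreal (pmf (Zdist P2 n) z * \<bar>z\<bar>)) \<le> T2 u"
        unfolding T2_def by (rule SUP_upper[where f = "\<lambda>n. \<Sum>\<^sub>\<infinity> z\<in>{z. \<bar>z\<bar> \<ge> u}. ennreal (pmf (Zdist P2 n) z * \<bar>z\<bar>)"]) (use n1 in auto)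
      have "ennreal (\<alpha>1 / real n) * Hs_eps \<epsilon> (P1 n) + ennreal (\<alpha>2 / real n) * Hs_eps \<epsilon> (P2 n)
          \<le> ennreal (1 / real n) * Hs_eps \<delta> (P n) + ennreal (c / real n)
            + (ennreal (u * \<tau> / \<epsilon>) + ennreal (\<alpha>1 / \<epsilon>) * T1 u) + (ennreal (u * \<tau> / \<epsilon>) + ennreal (\<alpha>2 / \<epsilon>) * T2 u)"
        unfolding \<delta>_def c_def by (rule PERN[where n=n and P=P and ?P1.0=P1 and ?P2.0=P2, OF mix a t \<epsilon> u0 n1 T1n T2n])
      also have "\<dots> \<le> ennreal (1 / real n) * Hs_eps \<delta> (P n) + ennreal (e / 3)
            + (ennreal (e / 6) + ennreal (e / 6)) + (ennreal (e / 6) + ennreal (e / 6))"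
        by (intro add_mono order_refl ennreal_leI cn[OF n] ut ae)
      also have "\<dots> = ennreal e + ennreal (1 / real n) * Hs_eps \<delta> (P n)"
        using esum by (simp add: add.assoc add.commute add.left_commute)
      finally show ?thesis .
    qed
    have "R \<epsilon> \<le> limsup (\<lambda>n. ennreal e + ennreal (1 / real n) * Hs_eps \<delta> (P n))"
      unfolding R_def by (rule Limsup_mono) (use bound in \<open>auto simp: eventually_sequentially\<close>)
    also have "\<dots> = ennreal e + F \<delta>" unfolding F_def by (rule Limsup_const_add) simp
    also have "F \<delta> \<le> (SUP e\<in>{0<..<1}. F e)" using d by (intro SUP_upper) auto
    finally show "R \<epsilon> \<le> (SUP e\<in>{0<..<1}. F e) + ennreal e" by (simp add: add.commute add_left_mono)
  qed
  have "(SUP e\<in>{0<..<1}. R e) \<le> (SUP e\<in>{0<..<1}. F e)" by (rule SUP_least) (use main in auto)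
  moreover have "Lim (at_right 0) (\<lambda>\<epsilon>. limsup (\<lambda>n.
            ennreal (\<alpha>1 / real n) * Hs_eps \<epsilon> (P1 n) + ennreal (\<alpha>2 / real n) * Hs_eps \<epsilon> (P2 n))) = Lim (at_right 0) R"
    unfolding R_def ..
  ultimately show ?thesis unfolding HsP LR by simp
qed

end
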